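(* Let $N\ge1$, $c_1,c_2\in\mathbb{R}$ with $2Nc_1\in\mathbb{Z}$, and let integers $\tilde k,\tilde l$ be given; set $\tilde m=\tilde k-2Nc_1\tilde l$. For $\bar m=0,\dots,N-1$ define $$\mathcal{E}(\bar m,\tilde m)=e^{j\frac{2\pi}{N}\left(\bar m\tilde l+Nc_2\left((\bar m+\tilde m)_N^2-\bar m^2\right)\right)},\quad \mathbf{P}=\operatorname{diag}\big(\mathcal{E}^*(\bar m,\tilde m),\ \bar m=0,\dots,N-1\big),$$ and the MD-CDDS-AFDM precoder $\mathbf{C}=\boldsymbol{\Pi}_N^{\tilde m}\mathbf{P}$. For $\mathbf{x}\in\mathbb{C}^N$ let $\mathbf{x}'=\mathbf{C}\mathbf{x}$. For integer paths $(k_i,l_i)$ and gains $h_i$, $i=1,\dots,P$, define the (noise-free) AFDM output $$y[m]=\sum_{i=1}^P h_i e^{j\frac{2\pi}{N}\left(Nc_1l_i^2-m'_il_i+Nc_2(m_i'^2-m^2)\right)}x'[m'_i],\quad m'_i=(m+\operatorname{ind}_i)_N,\ \operatorname{ind}_i=(2Nc_1l_i-k_i)_N.$$ Then for every $m=0,\dots,N-1$, $$y[m]=\sum_{i=1}^P \bar h_i\, e^{j\frac{2\pi}{N}\left(Nc_1\bar l_i^2-\bar m_i\bar l_i+Nc_2(\bar m_i^2-m^2)\right)}x[\bar m_i],\qquad \bar m_i=(m+\overline{\operatorname{ind}}_i)_N,$$ where $\bar k_i=k_i+\tilde k$, $\bar l_i=l_i+\tilde l$, $\overline{\operatorname{ind}}_i=(2Nc_1\bar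 l_i-\bar k_i)_N$, and $\bar h_i=h_i\,e^{-j\frac{2\pi}{N}\left(Nc_1(2l_i\tilde l+\tilde l^2)+\tilde m l_i\right)}$. In particular, MD-CDDS in AFDM is equivalent to shifting every path by $(\tilde k,\tilde l)$ in the AFDM input-output relation, with a unit-modulus gain change that does not depend on the symbol index.
   Context: $\boldsymbol{\Pi}_N$ is the $N\times N$ forward cyclic-shift matrix, $(\boldsymbol{\Pi}_N\mathbf{v})[n]=v[(n-1)_N]$ (for negative exponents, its inverse powers); $(\cdot)_N$ denotes reduction modulo $N$ into $\{0,\dots,N-1\}$; $^*$ denotes complex conjugation. The displayed formula for $y[m]$ is the discrete affine Fourier transform (DAFT) domain input-output relation of AFDM with chirp parameters $c_1,c_2$ over a doubly selective channel with integer normalized delays $l_i$ and Doppler shifts $k_i$. *)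

theory Defs
  imports "HOL-Analysis.Analysis"
begin

text \<open>Vectors in C^N are modelled as functions nat => complex; only the entries
  with index 0..N-1 are meaningful. (a)_N is reduction modulo N into {0..N-1}.\<close>

definition modN :: "nat \<Rightarrow> int \<Rightarrow> nat" where
  "modN N a = nat (a mod int N)"

definition cshift :: "nat \<Rightarrow> (nat \<Rightarrow> complex) \<Rightarrow> (nat \<Rightarrow> complex)" where
  "cshift N v = (\<lambda>n. v (modN N (int n - 1)))"

definition cshift_inv :: "nat \<Rightarrow> (nat \<Rightarrow> complex) \<Rightarrow> (nat \<Rightarrow> complex)" where
  "cshift_inv N v = (\<lambda>n. v (modN N (int n + 1)))"

definition Pi_pow :: "nat \<Rightarrow> int \<Rightarrow> (nat \<Rightarrow> complex) \<Rightarrow> (nat \<Rightarrow> complex)" where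
  "Pi_pow N s = (if 0 \<le> s then cshift N ^^ nat s else cshift_inv N ^^ nat (- s))"

text \<open>The integer 2 N c1 (assumed to be an integer in the theorem).\<close>
definition twoNc1 :: "nat \<Rightarrow> real \<Rightarrow> int" where
  "twoNc1 N c1 = \<lfloor>2 * real N * c1\<rfloor>"

definition mtil :: "nat \<Rightarrow> real \<Rightarrow> int \<Rightarrow> int \<Rightarrow> int" where
  "mtil N c1 kt lt = kt - twoNc1 N c1 * lt"

definition calE :: "nat \<Rightarrow> real \<Rightarrow> int \<Rightarrow> nat \<Rightarrow> int \<Rightarrow> complex" where
  "calE N c2 lt mb mt =
     exp (\<i> * of_real (2 * pi / real N *
        (real mb * real_of_int lt + real N * c2 * (real (modN N (int mb + mt)) ^ 2 - real mb ^ 2))))"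

definition precP :: "nat \<Rightarrow> real \<Rightarrow> real \<Rightarrow> int \<Rightarrow> int \<Rightarrow> (nat \<Rightarrow> complex) \<Rightarrow> (nat \<Rightarrow> complex)" where
  "precP N c1 c2 kt lt x = (\<lambda>mb. cnj (calE N c2 lt mb (mtil N c1 kt lt)) * x mb)"

definition precC :: "nat \<Rightarrow> real \<Rightarrow> real \<Rightarrow> int \<Rightarrow> int \<Rightarrow> (nat \<Rightarrow> complex) \<Rightarrow> (nat \<Rightarrow> complex)" where
  "precC N c1 c2 kt lt x = Pi_pow N (mtil N c1 kt lt) (precP N c1 c2 kt lt x)"

text \<open>Noise-free AFDM DAFT-domain output for paths i = 1..Pn with gains h i,
  Doppler k i, delay l i, input vector x.\<close>
definition afdm_out :: "nat \<Rightarrow> real \<Rightarrow> real \<Rightarrow> nat \<Rightarrow> (nat \<Rightarrow> complex) \<Rightarrow> (nat \<Rightarrow> int)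
    \<Rightarrow> (nat \<Rightarrow> int) \<Rightarrow> (nat \<Rightarrow> complex) \<Rightarrow> nat \<Rightarrow> complex" where
  "afdm_out N c1 c2 Pn h k l x m =
     (\<Sum>i\<in>{1..Pn}.
        let ind = modN N (twoNc1 N c1 * l i - k i);
            m' = modN N (int m + int ind)
        in h i * exp (\<i> * of_real (2 * pi / real N *
             (real N * c1 * real_of_int (l i) ^ 2 - real m' * real_of_int (l i)
              + real N * c2 * (real m' ^ 2 - real m ^ 2)))) * x m')"

end

theory Submission
  imports Defs
begin

lemma int_modN: "N \<ge> 1 \<Longrightarrow> int (modN N a) = a mod int N"
  unfolding modN_def by simp

lemma Pi_pow_eval:
  assumes "N \<ge> 1" and "n < N"
  shows "Pi_pow N s v n = v (modN N (int n - s))"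
proof (cases "0 \<le> s")
  case True
  have "\<And>n. n < N \<Longrightarrow> (cshift N ^^ j) v n = v (modN N (int n - int j))" for j
  proof (induction j)
    case 0
    show ?case using 0 by (simp add: modN_def)
  next
    case (Suc j)
    have "(cshift N ^^ Suc j) v n = (cshift N ^^ j) v (modN N (int n - 1))"
      by (simp add: cshift_def)
    also have "\<dots> = v (modN N (int (modN N (int n - 1)) - int j))"
      by (rule Suc.IH) (use assms(1) in \<open>simp add: modN_def nat_less_iff\<close>)
    also have "modN N (int (modN N (int n - 1)) - int j) = modN N (int n - int (Suc j))"
    proof -
      have "((int n - 1) mod int N - int j) mod int N = (int n - 1 - int j) mod int N"
        by (rule mod_diff_left_eq)
      then show ?thesis using assms by (simp add: int_modN) (simp add: modN_def algebra_simps)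
    qed
    finally show ?case .
  qed
  then show ?thesis using True assms(2) unfolding Pi_pow_def by simp
next
  case False
  have "\<And>n. n < N \<Longrightarrow> (cshift_inv N ^^ j) v n = v (modN N (int n + int j))" for j
  proof (induction j)
    case 0
    show ?case using 0 by (simp add: modN_def)
  next
    case (Suc j)
    have "(cshift_inv N ^^ Suc j) v n = (cshift_inv N ^^ j) v (modN N (int n + 1))"
      by (simp add: cshift_inv_def)
    also have "\<dots> = v (modN N (int (modN N (int n + 1)) + int j))"
      by (rule Suc.IH) (use assms(1) in \<open>simp add: modN_def nat_less_iff\<close>)
    also have "modN N (int (modN N (int n + 1)) + int j) = modN N (int n + int (Suc j))"
    proof -
      have "((int n + 1) mod int N + int j) mod int N = (int n + 1 + int j) mod int N"
        by (rule mod_add_left_eq)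
      then show ?thesis using assms by (simp add: int_modN) (simp add: modN_def algebra_simps)
    qed
    finally show ?case .
  qed
  then show ?thesis using False assms(2) unfolding Pi_pow_def by simp
qed

lemma exp_phase_eq:
  fixes A B :: real and q :: int
  assumes "N \<ge> 1" and "A = B + real N * of_int q"
  shows "exp (\<i> * of_real (2 * pi / real N * A)) = exp (\<i> * of_real (2 * pi / real N * B))"
proof -
  have "2 * pi / real N * A = 2 * pi / real N * B + 2 * pi * of_int q"
    using assms by (simp add: field_simps)
  then have "\<i> * of_real (2 * pi / real N * A) = \<i> * of_real (2 * pi / real N * B) + 2 * of_int q * pi * \<i>"
    by (simp add: algebra_simps)
  then show ?thesis by (simp add: exp_eq)
qed

theorem mainTheorem4:
  fixes N :: nat and c1 c2 :: real and kt lt :: int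
    and Pn :: nat and h :: "nat \<Rightarrow> complex" and k l :: "nat \<Rightarrow> int"
    and x :: "nat \<Rightarrow> complex" and m :: nat
  assumes "N \<ge> 1"
    and "2 * real N * c1 \<in> \<int>"
    and "m < N"
  shows "afdm_out N c1 c2 Pn h k l (precC N c1 c2 kt lt x) m =
         afdm_out N c1 c2 Pn
           (\<lambda>i. h i * exp (- \<i> * of_real (2 * pi / real N *
                 (real N * c1 * (2 * real_of_int (l i) * real_of_int lt + real_of_int lt ^ 2)
                  + real_of_int (mtil N c1 kt lt) * real_of_int (l i)))))
           (\<lambda>i. k i + kt) (\<lambda>i. l i + lt) x m"
  unfolding afdm_out_def Let_def
proof (rule sum.cong[OF refl])
  fix i
  define a where "a = twoNc1 N c1"
  define mt where "mt = mtil N c1 kt lt"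
  define m' where "m' = modN N (int m + int (modN N (a * l i - k i)))"
  define mb where "mb = modN N (int m' - mt)"
  have m'i: "int m' = (int m + a * l i - k i) mod int N"
    using assms(1) unfolding m'_def by (simp add: int_modN mod_add_right_eq algebra_simps)
  have m'lt: "m' < N" using assms(1) unfolding m'_def modN_def by (simp add: nat_less_iff)
  have mbi: "int mb = (int m' - mt) mod int N"
    using assms(1) unfolding mb_def by (simp add: int_modN)
  have mb2: "modN N (int m + int (modN N (a * (l i + lt) - (k i + kt)))) = mb"
  proof -
    have "int (modN N (int m + int (modN N (a * (l i + lt) - (k i + kt)))))
        = (int m + a * (l i + lt) - (k i + kt)) mod int N"
      using assms(1) by (simp add: int_modN mod_add_right_eq algebra_simps)
    also have "\<dots> = (int m + a * l i - k i - mt) mod int N"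
      unfolding mt_def mtil_def a_def by (simp add: algebra_simps)
    also have "\<dots> = int mb" unfolding mbi m'i by (simp add: mod_diff_left_eq)
    finally show ?thesis by simp
  qed
  have m'2: "modN N (int mb + mt) = m'"
  proof -
    have "int (modN N (int mb + mt)) = (int m' - mt + mt) mod int N"
      using assms(1) by (simp add: int_modN mbi mod_add_left_eq)
    also have "\<dots> = int m'" using m'i by simp
    finally show ?thesis by simp
  qed
  obtain q where q: "int mb + mt - int m' = int N * q"
  proof -
    have "(int mb + mt) mod int N = int m' mod int N"
      using m'2 assms(1) int_modN[of N "int mb + mt"] m'i by simp
    then have "int N dvd (int mb + mt - int m')" by (simp add: mod_eq_dvd_iff)
    then show ?thesis using that by (auto elim: dvdE)
  qed
  have qr: "real mb + of_int mt - real m' = real N * of_int q"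
    using arg_cong[OF q, of real_of_int] by simp
  have px: "precC N c1 c2 kt lt x m' = cnj (calE N c2 lt mb mt) * x mb"
    unfolding precC_def precP_def using Pi_pow_eval[OF assms(1) m'lt] mb_def mt_def by simp
  define L where "L = real_of_int (l i)"
  define T where "T = real_of_int lt"
  define A where "A = real N * c1 * L ^ 2 - real m' * L + real N * c2 * (real m' ^ 2 - real m ^ 2)"
  define B where "B = real mb * T + real N * c2 * (real m' ^ 2 - real mb ^ 2)"
  define C where "C = real N * c1 * (2 * L * T + T ^ 2) + real_of_int mt * L"
  define D where "D = real N * c1 * (L + T) ^ 2 - real mb * (L + T) + real N * c2 * (real mb ^ 2 - real m ^ 2)"
  have cE: "cnj (calE N c2 lt mb mt) = exp (- (\<i> * of_real (2 * pi / real N * B)))"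
    unfolding calE_def B_def T_def using m'2 by (simp add: exp_cnj)
  have m'eq: "real m' = real mb + of_int mt - real N * of_int q" using qr by simp
  have ph: "A - B = (D - C) + real N * of_int (q * l i)"
    unfolding A_def B_def C_def D_def L_def T_def m'eq
    by (simp add: algebra_simps power2_eq_square)
  have e: "exp (\<i> * of_real (2 * pi / real N * A)) * exp (- (\<i> * of_real (2 * pi / real N * B)))
        = exp (- \<i> * of_real (2 * pi / real N * C)) * exp (\<i> * of_real (2 * pi / real N * D))"
  proof -
    have g: "\<And>u w::complex. exp u * exp (- w) = exp (u - w)" by (simp add: mult_exp_exp)
    have g2: "\<And>u w::complex. exp (- w) * exp u = exp (u - w)" by (simp add: mult_exp_exp)
    have "exp (\<i> * of_real (2 * pi / real N * A)) * exp (- (\<i> * of_real (2 * pi / real N * B)))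
       = exp (\<i> * of_real (2 * pi / real N * (A - B)))"
      unfolding g by (simp only: right_diff_distrib of_real_diff)
    also have "\<dots> = exp (\<i> * of_real (2 * pi / real N * (D - C)))"
      by (rule exp_phase_eq[OF assms(1) ph])
    also have "\<dots> = exp (- \<i> * of_real (2 * pi / real N * C)) * exp (\<i> * of_real (2 * pi / real N * D))"
      unfolding minus_mult_left[symmetric] g2 by (simp only: right_diff_distrib of_real_diff)
    finally show ?thesis .
  qed
  have key: "h i * exp (\<i> * of_real (2 * pi / real N * A)) * precC N c1 c2 kt lt x m'
      = h i * exp (- \<i> * of_real (2 * pi / real N * C)) * exp (\<i> * of_real (2 * pi / real N * D)) * x mb"
  proof -
    have "h i * exp (\<i> * of_real (2 * pi / real N * A)) * precC N c1 c2 kt lt x m'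
       = h i * (exp (\<i> * of_real (2 * pi / real N * A)) * exp (- (\<i> * of_real (2 * pi / real N * B)))) * x mb"
      by (simp only: px cE mult.assoc)
    also have "\<dots> = h i * (exp (- \<i> * of_real (2 * pi / real N * C)) * exp (\<i> * of_real (2 * pi / real N * D))) * x mb"
      by (simp only: e)
    finally show ?thesis by (simp only: mult.assoc)
  qed
  show "h i * exp (\<i> * of_real (2 * pi / real N *
             (real N * c1 * real_of_int (l i) ^ 2 - real (modN N (int m + int (modN N (twoNc1 N c1 * l i - k i)))) * real_of_int (l i)
              + real N * c2 * (real (modN N (int m + int (modN N (twoNc1 N c1 * l i - k i)))) ^ 2 - real m ^ 2)))) *
        precC N c1 c2 kt lt x (modN N (int m + int (modN N (twoNc1 N c1 * l i - k i)))) =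
       h i * exp (- \<i> * of_real (2 * pi / real N *
                 (real N * c1 * (2 * real_of_int (l i) * real_of_int lt + real_of_int lt ^ 2)
                  + real_of_int (mtil N c1 kt lt) * real_of_int (l i)))) *
        exp (\<i> * of_real (2 * pi / real N *
             (real N * c1 * real_of_int (l i + lt) ^ 2 - real (modN N (int m + int (modN N (twoNc1 N c1 * (l i + lt) - (k i + kt))))) * real_of_int (l i + lt)
              + real N * c2 * (real (modN N (int m + int (modN N (twoNc1 N c1 * (l i + lt) - (k i + kt))))) ^ 2 - real m ^ 2)))) *
        x (modN N (int m + int (modN N (twoNc1 N c1 * (l i + lt) - (k i + kt)))))"
    using key unfolding A_def C_def D_def L_def T_def mt_def m'_def mb2[symmetric] a_def of_int_add .
qed

end
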